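(* Consider a drone cellular network in which drone base stations (DBSs) lie in the plane $z=h$ (the DBS plane), $h>0$, and a typical user equipment (UE) is located at the origin $\mathbf{o}=(0,0,0)$; let $\mathbf{o}'=(0,0,h)$. Suppose every DBS moves in the DBS plane along a straight line, each in its own direction, and all DBSs move with the same constant speed $v>0$ (same speed model, SSM). At each time $t$ the serving DBS of the typical UE is the DBS closest to the UE (equivalently, the DBS whose position minimizes the distance to $\mathbf{o}'$). Let $D_0$ be the serving DBS at time $t=t_0$, and suppose that a handover occurs at time $t=t_1>t_0$, after which the DBS $D_1$ becomes the serving DBS. Then $D_0$ cannot become the serving DBS again at any time $t>t_1$.
   Context: A handover occurs when the serving DBS (the nearest DBS to the typical UE) changes. *)

theory Defs
  imports "HOL-Analysis.Analysis"
begin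

text \<open>Points of space are vectors in real^3; the typical UE sits at the origin 0.
  DBS i starts at p i (in the plane z = h) and moves with speed v along the unit
  direction w i (parallel to the DBS plane, third component 0).\<close>

definition dbs_pos :: "('a \<Rightarrow> real^3) \<Rightarrow> ('a \<Rightarrow> real^3) \<Rightarrow> real \<Rightarrow> 'a \<Rightarrow> real \<Rightarrow> real^3" where
  "dbs_pos p w v i t = p i + (v * t) *\<^sub>R w i"

definition serving :: "'a set \<Rightarrow> ('a \<Rightarrow> real \<Rightarrow> real^3) \<Rightarrow> real \<Rightarrow> 'a \<Rightarrow> bool" where
  "serving I pos t i \<longleftrightarrow> i \<in> I \<and> (\<forall>j\<in>I. dist (pos i t) 0 \<le> dist (pos j t) 0)"

end

theory Submission
  imports Defs
begin

lemma sq_norm_pos: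
  assumes "norm (w i) = 1"
  shows "(norm (dbs_pos p w v i s))\<^sup>2 = p i \<bullet> p i + 2* (v * s) * (p i \<bullet> w i) + (v * s)^2"
proof -
  have ww: "w i \<bullet> w i = 1" using assms by (metis norm_eq_sqrt_inner real_sqrt_eq_1_iff)
  show ?thesis unfolding dbs_pos_def power2_norm_eq_inner
    by (simp add: inner_add_left inner_add_right ww inner_commute power2_eq_square algebra_simps)
qed

theorem lemma2:
  fixes I :: "'a set" and p w :: "'a \<Rightarrow> real^3" and h v t0 t1 :: real and D0 D1 :: 'a
  assumes "h > 0" and "v > 0"
    and "\<forall>i\<in>I. p i $ 3 = h \<and> w i $ 3 = 0 \<and> norm (w i) = 1"
    and "D0 \<in> I" and "D1 \<in> I" and "D1 \<noteq> D0"
    and "t0 < t1"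
    and "\<forall>t. t0 \<le> t \<and> t < t1 \<longrightarrow> serving I (dbs_pos p w v) t D0"
    and "\<exists>\<epsilon>>0. \<forall>t. t1 < t \<and> t < t1 + \<epsilon> \<longrightarrow>
            serving I (dbs_pos p w v) t D1 \<and> \<not> serving I (dbs_pos p w v) t D0"
  shows "\<forall>t>t1. \<not> serving I (dbs_pos p w v) t D0"
proof (intro allI impI)
  fix s assume st: "s > t1"
  define A where "A = p D0 \<bullet> p D0 - p D1 \<bullet> p D1"
  define B where "B = 2* (p D0 \<bullet> w D0) - 2* (p D1 \<bullet> w D1)"
  have nd: "\<And>x::real^3. dist x 0 = norm x" by (simp add: dist_norm)
  have g: "(norm (dbs_pos p w v D0 r))\<^sup>2 - (norm (dbs_pos p w v D1 r))\<^sup>2 = A + B * (v * r)" for r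
    using sq_norm_pos[of w D0 p v r] sq_norm_pos[of w D1 p v r] assms(3,4,5)
    unfolding A_def B_def by (simp add: algebra_simps)
  have le_iff: "norm x \<le> norm y \<longleftrightarrow> (norm x)\<^sup>2 \<le> (norm y)\<^sup>2" for x y :: "real^3"
    by (simp add: power_mono_iff)
  have lt_iff: "norm x < norm y \<longleftrightarrow> (norm x)\<^sup>2 < (norm y)\<^sup>2" for x y :: "real^3"
    using le_iff[of y x] by linarith
  have g0: "A + B * (v * t0) \<le> 0"
  proof -
    have "serving I (dbs_pos p w v) t0 D0" using assms(7,8) by simp
    then have "norm (dbs_pos p w v D0 t0) \<le> norm (dbs_pos p w v D1 t0)"
      using assms(5) unfolding serving_def nd by auto
    then show ?thesis using g[of t0] le_iff[of "dbs_pos p w v D0 t0" "dbs_pos p w v D1 t0"] by linarith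
  qed
  obtain e where e: "e > 0" "\<forall>t. t1 < t \<and> t < t1 + e \<longrightarrow>
            serving I (dbs_pos p w v) t D1 \<and> \<not> serving I (dbs_pos p w v) t D0"
    using assms(9) by blast
  define ta where "ta = (t1 + min s (t1 + e)) / 2"
  have ta: "t1 < ta" "ta < t1 + e" "ta < s" using st e(1) unfolding ta_def by auto
  have gta: "A + B * (v * ta) > 0"
  proof -
    have s1: "serving I (dbs_pos p w v) ta D1" and s0: "\<not> serving I (dbs_pos p w v) ta D0"
      using e(2) ta(1,2) by auto
    from s0 assms(4) obtain j where j: "j \<in> I" "norm (dbs_pos p w v j ta) < norm (dbs_pos p w v D0 ta)"
      unfolding serving_def nd by auto
    from s1 j(1) have "norm (dbs_pos p w v D1 ta) \<le> norm (dbs_pos p w v j ta)"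
      unfolding serving_def nd by auto
    with j(2) have "norm (dbs_pos p w v D1 ta) < norm (dbs_pos p w v D0 ta)" by linarith
    then show ?thesis using g[of ta] lt_iff[of "dbs_pos p w v D1 ta" "dbs_pos p w v D0 ta"] by linarith
  qed
  have "t0 < ta" using assms(7) ta by linarith
  have Bpos: "B * v > 0"
  proof -
    have eq: "B * v * (ta - t0) = (A + B * (v * ta)) - (A + B * (v * t0))" by (simp add: algebra_simps)
    have "B * v * (ta - t0) > 0" unfolding eq using g0 gta by linarith
    then show ?thesis using \<open>t0 < ta\<close> by (simp add: zero_less_mult_iff)
  qed
  have "B * v * (s - ta) > 0" using Bpos ta(3) by simp
  moreover have "A + B * (v * s) = (A + B * (v * ta)) + B * v * (s - ta)" by (simp add: algebra_simps)
  ultimately have "A + B * (v * s) > 0" using gta by linarith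
  then have "norm (dbs_pos p w v D1 s) < norm (dbs_pos p w v D0 s)"
    using g[of s] lt_iff[of "dbs_pos p w v D1 s" "dbs_pos p w v D0 s"] by linarith
  then show "\<not> serving I (dbs_pos p w v) s D0"
    using assms(5) unfolding serving_def nd by (auto simp: not_le)
qed

end
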